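(* Let $f_1,\dots,f_d:\mathbb{R}^m\times\mathbb{R}^m\to\mathscr I^{p,q}$ be functions whose values $f_1(\vec x,\vec u),\dots,f_d(\vec x,\vec u)$ are, for every $(\vec x,\vec u)$, mutually coorthogonal blades. For each $l$ let $g_l$ be one of the four maps $\mathscr I^{p,q}\to\mathcal{G}^{p,q}$: $g(h)=e^{h}$, $g(h)=\cos(|h|)$, $g(h)=\frac{h}{|h|}\sin(|h|)$, or $g(h)=0$, where $|h|=\sqrt{-h^2}$. Then for every $\vec{A}\in\mathcal{G}^{p,q}$ and all $\vec x,\vec u\in\mathbb{R}^m$, $$\prod_{l=1}^{d}g_l\big(-f_l(\vec{x},\vec{u})\big)\,\vec{A}=\sum_{\vec{j}\in\{0,1\}^d}\vec{A}_{\vec c^{\vec{j}}(f_1(\vec x,\vec u),\dots,f_d(\vec x,\vec u))}\prod_{l=1}^{d}g_l\big(-(-1)^{j_l}f_l(\vec{x},\vec{u})\big),$$ where the products are ordered with $l$ increasing from left to right.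
   Context: $\mathcal{G}^{p,q}$ is the real geometric algebra of $\mathbb{R}^{p,q}$; $\mathscr I^{p,q}=\{i\in\mathcal{G}^{p,q}: i^2\in\mathbb{R},\ i^2<0\}$ (all such elements are invertible); $e^X=\sum_r X^r/r!$. Blades $\vec A,\vec B$ are coorthogonal if $\vec A\vec B=\pm\vec B\vec A$. For invertible $\vec B$: $\vec{A}_{\vec c^0(\vec{B})}=\frac12(\vec{A}+\vec{B}^{-1}\vec{A}\vec{B})$, $\vec{A}_{\vec c^1(\vec{B})}=\frac12(\vec{A}-\vec{B}^{-1}\vec{A}\vec{B})$, and for invertible $\vec B_1,\dots,\vec B_d$ and $\vec j\in\{0,1\}^d$: $\vec{A}_{\vec c^{\vec{j}}(\vec B_1,\dots,\vec B_d)}=((\vec{A}_{\vec c^{j_1}(\vec{B}_1)})_{\vec c^{j_2}(\vec{B}_2)}\cdots)_{\vec c^{j_d}(\vec{B}_d)}$ (for mutually coorthogonal invertible blades this does not depend on the order). *)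

theory Defs
  imports "HOL-Analysis.Analysis"
begin

text \<open>A multivector is represented by its
coordinates w.r.t. the basis blades e_S (S a subset of {0..<p+q}, e_S the product of
the e_i, i in S, in increasing order). Basis vectors e_i square to +1 for i < p and
to -1 for p \<le> i < p+q.\<close>

type_synonym mv = "nat set \<Rightarrow> real"

definition mv :: "nat \<Rightarrow> nat \<Rightarrow> mv \<Rightarrow> bool" where
  "mv p q A \<longleftrightarrow> (\<forall>S. \<not> S \<subseteq> {..<p+q} \<longrightarrow> A S = 0)"

definition metric :: "nat \<Rightarrow> nat \<Rightarrow> real" where
  "metric p i = (if i < p then 1 else -1)"

text \<open>e_X e_Y = bsign p X Y e_{X \<triangle> Y}\<close>
definition bsign :: "nat \<Rightarrow> nat set \<Rightarrow> nat set \<Rightarrow> real" where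
  "bsign p X Y = (-1) ^ card {(i,j). i \<in> X \<and> j \<in> Y \<and> j < i} * (\<Prod>i\<in>X \<inter> Y. metric p i)"

definition symdiff :: "nat set \<Rightarrow> nat set \<Rightarrow> nat set" where
  "symdiff X Y = (X - Y) \<union> (Y - X)"

definition gp :: "nat \<Rightarrow> nat \<Rightarrow> mv \<Rightarrow> mv \<Rightarrow> mv" where
  "gp p q A B = (\<lambda>S. if S \<subseteq> {..<p+q}
     then (\<Sum>X\<in>Pow {..<p+q}. A X * B (symdiff X S) * bsign p X (symdiff X S)) else 0)"

definition wedge :: "nat \<Rightarrow> nat \<Rightarrow> mv \<Rightarrow> mv \<Rightarrow> mv" where
  "wedge p q A B = (\<lambda>S. if S \<subseteq> {..<p+q}
     then (\<Sum>X\<in>Pow S. A X * B (S - X) * (-1) ^ card {(i,j). i \<in> X \<and> j \<in> S - X \<and> j < i})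
     else 0)"

definition scalar :: "real \<Rightarrow> mv" where
  "scalar r = (\<lambda>S. if S = {} then r else 0)"

definition smul :: "real \<Rightarrow> mv \<Rightarrow> mv" where
  "smul c A = (\<lambda>S. c * A S)"

definition madd :: "mv \<Rightarrow> mv \<Rightarrow> mv" where
  "madd A B = (\<lambda>S. A S + B S)"

definition mneg :: "mv \<Rightarrow> mv" where
  "mneg A = (\<lambda>S. - A S)"

definition mzero :: mv where
  "mzero = (\<lambda>S. 0)"

definition is_vec :: "nat \<Rightarrow> nat \<Rightarrow> mv \<Rightarrow> bool" where
  "is_vec p q v \<longleftrightarrow> mv p q v \<and> (\<forall>S. v S \<noteq> 0 \<longrightarrow> card S = 1)"

definition blade :: "nat \<Rightarrow> nat \<Rightarrow> mv \<Rightarrow> bool" where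
  "blade p q A \<longleftrightarrow> (\<exists>c vs. (\<forall>v\<in>set vs. is_vec p q v) \<and> A = foldr (wedge p q) vs (scalar c))"

definition coorth :: "nat \<Rightarrow> nat \<Rightarrow> mv \<Rightarrow> mv \<Rightarrow> bool" where
  "coorth p q A B \<longleftrightarrow> gp p q A B = gp p q B A \<or> gp p q A B = mneg (gp p q B A)"

definition Iset :: "nat \<Rightarrow> nat \<Rightarrow> mv set" where
  "Iset p q = {i. mv p q i \<and> (\<exists>r::real. gp p q i i = scalar r \<and> r < 0)}"

definition minv :: "nat \<Rightarrow> nat \<Rightarrow> mv \<Rightarrow> mv" where
  "minv p q B = (THE C. mv p q C \<and> gp p q B C = scalar 1 \<and> gp p q C B = scalar 1)"

primrec mpow :: "nat \<Rightarrow> nat \<Rightarrow> mv \<Rightarrow> nat \<Rightarrow> mv" where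
  "mpow p q X 0 = scalar 1"
| "mpow p q X (Suc n) = gp p q (mpow p q X n) X"

definition mexp :: "nat \<Rightarrow> nat \<Rightarrow> mv \<Rightarrow> mv" where
  "mexp p q X = (\<lambda>S. \<Sum>r. mpow p q X r S / fact r)"

text \<open>|h| = sqrt(-h^2) for h in I^{p,q} (h^2 is a scalar)\<close>
definition mabs :: "nat \<Rightarrow> nat \<Rightarrow> mv \<Rightarrow> real" where
  "mabs p q h = sqrt (- gp p q h h {})"

datatype gkind = GExp | GCos | GSin | GZero

fun gfun :: "nat \<Rightarrow> nat \<Rightarrow> gkind \<Rightarrow> mv \<Rightarrow> mv" where
  "gfun p q GExp h = mexp p q h"
| "gfun p q GCos h = scalar (cos (mabs p q h))"
| "gfun p q GSin h = smul (sin (mabs p q h) / mabs p q h) h"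
| "gfun p q GZero h = mzero"

definition mprod :: "nat \<Rightarrow> nat \<Rightarrow> mv list \<Rightarrow> mv" where
  "mprod p q xs = foldr (gp p q) xs (scalar 1)"

text \<open>A_{c^j(B)} = 1/2 (A + (-1)^j B^{-1} A B)\<close>
definition cproj1 :: "nat \<Rightarrow> nat \<Rightarrow> nat \<Rightarrow> mv \<Rightarrow> mv \<Rightarrow> mv" where
  "cproj1 p q j B A = smul (1/2) (madd A (smul ((-1) ^ j) (gp p q (gp p q (minv p q B) A) B)))"

fun cproj :: "nat \<Rightarrow> nat \<Rightarrow> mv \<Rightarrow> (nat \<times> mv) list \<Rightarrow> mv" where
  "cproj p q A [] = A"
| "cproj p q A ((j, B) # rest) = cproj p q (cproj1 p q j B A) rest"

end

theory Submission
  imports Defs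
begin

definition phi :: "nat \<Rightarrow> nat \<Rightarrow> nat \<Rightarrow> real" where
  "phi p i j = (if j < i then -1 else 1) * (if i = j then metric p i else 1)"

definition sig :: "nat \<Rightarrow> nat set \<Rightarrow> nat set \<Rightarrow> real" where
  "sig p X Y = (\<Prod>i\<in>X. \<Prod>j\<in>Y. phi p i j)"

lemma metric_sq: "metric p i * metric p i = 1"
  by (simp add: metric_def)

lemma phi_sq: "phi p i j * phi p i j = 1"
  by (simp add: phi_def metric_def)

lemma bsign_sig:
  assumes "finite X" "finite Y"
  shows "bsign p X Y = sig p X Y"
proof -
  have "{(i,j). i \<in> X \<and> j \<in> Y \<and> j < i} = {z \<in> X \<times> Y. snd z < fst z}" by auto
  hence "(-1::real) ^ card {(i,j). i \<in> X \<and> j \<in> Y \<and> j < i} = (\<Prod>z\<in>{z \<in> X \<times> Y. snd z < fst z}. -1)"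
    by simp
  also have "\<dots> = (\<Prod>z\<in>X \<times> Y. if snd z < fst z then -1 else 1)"
    using assms prod.inter_filter[of "X \<times> Y" "\<lambda>_. -1::real" "\<lambda>z. snd z < fst z"] by simp
  also have "\<dots> = (\<Prod>i\<in>X. \<Prod>j\<in>Y. if j < i then -1 else 1)"
    by (simp add: prod.cartesian_product case_prod_beta)
  finally have 1: "(-1::real) ^ card {(i,j). i \<in> X \<and> j \<in> Y \<and> j < i} = (\<Prod>i\<in>X. \<Prod>j\<in>Y. if j < i then -1 else 1)" .
  have "X \<inter> Y = {i \<in> X. i \<in> Y}" by auto
  hence "(\<Prod>i\<in>X \<inter> Y. metric p i) = (\<Prod>i\<in>X. if i \<in> Y then metric p i else 1)"
    using assms by (simp add: prod.inter_filter)
  also have "\<dots> = (\<Prod>i\<in>X. \<Prod>j\<in>Y. if i = j then metric p i else 1)"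
    using assms by (intro prod.cong) auto
  finally have 2: "(\<Prod>i\<in>X \<inter> Y. metric p i) = (\<Prod>i\<in>X. \<Prod>j\<in>Y. if i = j then metric p i else 1)" .
  have 3: "sig p X Y = (\<Prod>i\<in>X. \<Prod>j\<in>Y. if j < i then -1 else 1) * (\<Prod>i\<in>X. \<Prod>j\<in>Y. if i = j then metric p i else 1)"
    unfolding sig_def phi_def prod.distrib ..
  show ?thesis unfolding bsign_def 1 2 3 ..
qed

lemma prod_symdiff:
  fixes g :: "nat \<Rightarrow> real"
  assumes "finite X" "finite Y" "\<And>i. g i * g i = 1"
  shows "prod g (symdiff X Y) = prod g X * prod g Y"
proof -
  have a: "prod g (symdiff X Y) = prod g (X - Y) * prod g (Y - X)"
    unfolding symdiff_def using assms by (intro prod.union_disjoint) auto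
  have b0: "prod g ((X - Y) \<union> (X \<inter> Y)) = prod g (X - Y) * prod g (X \<inter> Y)"
    by (rule prod.union_disjoint) (use assms in auto)
  have b1: "(X - Y) \<union> (X \<inter> Y) = X" by auto
  have c0: "prod g ((Y - X) \<union> (X \<inter> Y)) = prod g (Y - X) * prod g (X \<inter> Y)"
    by (rule prod.union_disjoint) (use assms in auto)
  have c1: "(Y - X) \<union> (X \<inter> Y) = Y" by auto
  have d0: "prod g (X \<inter> Y) * prod g (X \<inter> Y) = (\<Prod>i\<in>X \<inter> Y. g i * g i)"
    by (rule prod.distrib[symmetric])
  have d: "prod g (X \<inter> Y) * prod g (X \<inter> Y) = 1"
    unfolding d0 assms(3) by (rule prod.neutral_const)
  have e: "(prod g (X - Y) * prod g (X \<inter> Y)) * (prod g (Y - X) * prod g (X \<inter> Y))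
      = prod g (X - Y) * prod g (Y - X) * (prod g (X \<inter> Y) * prod g (X \<inter> Y))"
    by (simp only: ac_simps)
  show ?thesis unfolding a using b0 c0 e d unfolding b1 c1 by simp
qed

lemma prod_phi_sq: "(\<Prod>j\<in>Z. phi p i j) * (\<Prod>j\<in>Z. phi p i j) = 1"
proof -
  have "(\<Prod>j\<in>Z. phi p i j) * (\<Prod>j\<in>Z. phi p i j) = (\<Prod>j\<in>Z. phi p i j * phi p i j)"
    by (rule prod.distrib[symmetric])
  also have "\<dots> = 1" unfolding phi_sq by (rule prod.neutral_const)
  finally show ?thesis .
qed

lemma sig_symdiff_left:
  assumes "finite X" "finite Y"
  shows "sig p (symdiff X Y) Z = sig p X Z * sig p Y Z"
  unfolding sig_def by (rule prod_symdiff[OF assms prod_phi_sq])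

lemma sig_symdiff_right:
  assumes "finite Y" "finite Z"
  shows "sig p X (symdiff Y Z) = sig p X Y * sig p X Z"
proof -
  have "sig p X (symdiff Y Z) = (\<Prod>i\<in>X. (\<Prod>j\<in>Y. phi p i j) * (\<Prod>j\<in>Z. phi p i j))"
    unfolding sig_def by (intro prod.cong refl prod_symdiff[OF assms phi_sq])
  also have "\<dots> = sig p X Y * sig p X Z" unfolding sig_def by (rule prod.distrib)
  finally show ?thesis .
qed

lemma bsign_cocycle:
  assumes "finite X" "finite Y" "finite Z"
  shows "bsign p X Y * bsign p (symdiff X Y) Z = bsign p X (symdiff Y Z) * bsign p Y Z"
proof -
  have f: "finite (symdiff X Y)" "finite (symdiff Y Z)" using assms by (auto simp: symdiff_def)
  show ?thesis
    using assms f by (simp only: bsign_sig sig_symdiff_left sig_symdiff_right ac_simps)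
qed

lemma abs_bsign: "\<bar>bsign p X Y\<bar> = 1"
  by (simp add: bsign_def abs_prod abs_mult metric_def, intro prod.neutral, simp)

lemma sd_inv[simp]: "symdiff X (symdiff X Y) = Y" by (auto simp: symdiff_def)
lemma sd_sub: "X \<subseteq> U \<Longrightarrow> S \<subseteq> U \<Longrightarrow> symdiff X S \<subseteq> U" by (auto simp: symdiff_def)
lemma sd_empty[simp]: "symdiff X {} = X" "symdiff {} X = X" "symdiff X X = {}" by (auto simp: symdiff_def)
lemma sd_sd: "symdiff (symdiff X Y) (symdiff X S) = symdiff Y S" by (auto simp: symdiff_def)
lemma sd_sd2: "symdiff (symdiff X Y) (symdiff Y S) = symdiff X S" by (auto simp: symdiff_def)
lemma sd_eq_empty: "symdiff X S = {} \<longleftrightarrow> X = S" by (auto simp: symdiff_def)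

lemma sum_reindex_sd:
  assumes "X \<subseteq> U"
  shows "(\<Sum>Z\<in>Pow U. g Z) = (\<Sum>Y\<in>Pow U. g (symdiff X Y))"
  by (rule sum.reindex_bij_witness[of _ "symdiff X" "symdiff X"]) (use assms in \<open>simp_all add: sd_sub\<close>)

lemma gp_assoc: "gp p q (gp p q A B) C = gp p q A (gp p q B C)"
proof (rule ext)
  fix S
  let ?U = "{..<p+q}"
  let ?b = "bsign p"
  let ?s = "symdiff"
  show "gp p q (gp p q A B) C S = gp p q A (gp p q B C) S"
  proof (cases "S \<subseteq> ?U")
    case False thus ?thesis by (simp add: gp_def)
  next
    case True
    have fin: "\<And>X. X \<in> Pow ?U \<Longrightarrow> finite X" by (auto intro: finite_subset)
    have "gp p q (gp p q A B) C S = (\<Sum>Y\<in>Pow ?U. (\<Sum>X\<in>Pow ?U. A X * B (?s X Y) * ?b X (?s X Y)) * C (?s Y S) * ?b Y (?s Y S))"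
      using True by (simp add: gp_def)
    also have "\<dots> = (\<Sum>Y\<in>Pow ?U. \<Sum>X\<in>Pow ?U. A X * B (?s X Y) * C (?s Y S) * (?b X (?s X Y) * ?b Y (?s Y S)))"
      unfolding sum_distrib_right by (simp add: mult_ac)
    also have "\<dots> = (\<Sum>X\<in>Pow ?U. \<Sum>Y\<in>Pow ?U. A X * B (?s X Y) * C (?s Y S) * (?b X (?s X Y) * ?b Y (?s Y S)))"
      by (rule sum.swap)
    also have "\<dots> = (\<Sum>X\<in>Pow ?U. \<Sum>Y\<in>Pow ?U. A X * B (?s X Y) * C (?s Y S) * (?b (?s X Y) (?s Y S) * ?b X (?s X S)))"
    proof (intro sum.cong refl)
      fix X Y assume X: "X \<in> Pow ?U" and Y: "Y \<in> Pow ?U"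
      have "?b X (?s X Y) * ?b (?s X (?s X Y)) (?s Y S) = ?b X (?s (?s X Y) (?s Y S)) * ?b (?s X Y) (?s Y S)"
        by (rule bsign_cocycle) (use X Y True fin in \<open>auto intro: finite_subset simp: symdiff_def\<close>)
      thus "A X * B (?s X Y) * C (?s Y S) * (?b X (?s X Y) * ?b Y (?s Y S)) =
            A X * B (?s X Y) * C (?s Y S) * (?b (?s X Y) (?s Y S) * ?b X (?s X S))"
        by (simp add: sd_sd2 mult_ac)
    qed
    also have "\<dots> = (\<Sum>X\<in>Pow ?U. A X * (\<Sum>Y\<in>Pow ?U. B (?s X Y) * C (?s (?s X Y) (?s X S)) * ?b (?s X Y) (?s (?s X Y) (?s X S))) * ?b X (?s X S))"
      by (simp add: sum_distrib_left sum_distrib_right sd_sd mult_ac)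
    also have "\<dots> = (\<Sum>X\<in>Pow ?U. A X * (\<Sum>Z\<in>Pow ?U. B Z * C (?s Z (?s X S)) * ?b Z (?s Z (?s X S))) * ?b X (?s X S))"
      by (intro sum.cong refl arg_cong2[where f="(*)"] arg_cong2[where f="(*)"] sum_reindex_sd[symmetric]) auto
    also have "\<dots> = gp p q A (gp p q B C) S"
      using True by (simp add: gp_def sd_sub)
    finally show ?thesis .
  qed
qed

lemma gp_madd_left: "gp p q (madd A B) C = madd (gp p q A C) (gp p q B C)"
  by (rule ext) (simp add: gp_def madd_def algebra_simps sum.distrib)
lemma gp_madd_right: "gp p q C (madd A B) = madd (gp p q C A) (gp p q C B)"
  by (rule ext) (simp add: gp_def madd_def algebra_simps sum.distrib)
lemma gp_smul_left: "gp p q (smul c A) B = smul c (gp p q A B)"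
  by (rule ext) (simp add: gp_def smul_def algebra_simps sum_distrib_left)
lemma gp_smul_right: "gp p q B (smul c A) = smul c (gp p q B A)"
  by (rule ext) (simp add: gp_def smul_def algebra_simps sum_distrib_left)
lemma gp_mzero_left: "gp p q mzero A = mzero"
  by (rule ext) (simp add: gp_def mzero_def)
lemma gp_mzero_right: "gp p q A mzero = mzero"
  by (rule ext) (simp add: gp_def mzero_def)

lemma bsign_empty[simp]: "bsign p {} Y = 1" "bsign p X {} = 1"
  by (simp_all add: bsign_def)

lemma gp_scalar_left: assumes "mv p q A" shows "gp p q (scalar c) A = smul c A"
proof (rule ext)
  fix S
  show "gp p q (scalar c) A S = smul c A S"
  proof (cases "S \<subseteq> {..<p+q}")
    case True
    have "gp p q (scalar c) A S = (\<Sum>X\<in>Pow {..<p+q}. if X = {} then c * A S else 0)"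
      unfolding gp_def if_P[OF True] by (rule sum.cong) (auto simp: scalar_def)
    also have "\<dots> = c * A S" by (simp add: sum.delta)
    finally show ?thesis by (simp add: smul_def)
  next
    case False thus ?thesis using assms by (simp add: gp_def smul_def mv_def)
  qed
qed

lemma gp_scalar_right: assumes "mv p q A" shows "gp p q A (scalar c) = smul c A"
proof (rule ext)
  fix S
  show "gp p q A (scalar c) S = smul c A S"
  proof (cases "S \<subseteq> {..<p+q}")
    case True
    have "gp p q A (scalar c) S = (\<Sum>X\<in>Pow {..<p+q}. if X = S then c * A S else 0)"
      unfolding gp_def if_P[OF True] by (rule sum.cong) (auto simp: scalar_def sd_eq_empty)
    also have "\<dots> = c * A S" using True by (simp add: sum.delta)
    finally show ?thesis by (simp add: smul_def)
  next
    case False thus ?thesis using assms by (simp add: gp_def smul_def mv_def)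
  qed
qed

lemma mv_gp[simp]: "mv p q (gp p q A B)" by (simp add: mv_def gp_def)
lemma mv_madd[simp]: "mv p q A \<Longrightarrow> mv p q B \<Longrightarrow> mv p q (madd A B)" by (simp add: mv_def madd_def)
lemma mv_smul[simp]: "mv p q A \<Longrightarrow> mv p q (smul c A)" by (simp add: mv_def smul_def)
lemma mv_scalar[simp]: "mv p q (scalar c)" by (simp add: mv_def scalar_def)
lemma mv_mzero[simp]: "mv p q mzero" by (simp add: mv_def mzero_def)
lemma mneg_smul: "mneg A = smul (-1) A" by (simp add: mneg_def smul_def fun_eq_iff)
lemma smul_smul[simp]: "smul a (smul b A) = smul (a*b) A" by (simp add: smul_def fun_eq_iff)
lemma smul_one[simp]: "smul 1 A = A" by (simp add: smul_def fun_eq_iff)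

lemma gp_sum_right:
  "gp p q X (\<lambda>S. \<Sum>j\<in>J. F j S) = (\<lambda>S. \<Sum>j\<in>J. gp p q X (F j) S)"
  by (rule ext) (auto simp: gp_def sum_distrib_left sum_distrib_right intro: sum.swap)

definition mnorm :: "nat \<Rightarrow> nat \<Rightarrow> mv \<Rightarrow> real" where
  "mnorm p q A = (\<Sum>S\<in>Pow {..<p+q}. \<bar>A S\<bar>)"

lemma mnorm_nonneg: "0 \<le> mnorm p q A" by (simp add: mnorm_def sum_nonneg)

lemma coord_le: assumes "mv p q A" shows "\<bar>A T\<bar> \<le> mnorm p q A"
proof (cases "T \<subseteq> {..<p+q}")
  case True thus ?thesis unfolding mnorm_def
    by (intro member_le_sum[where f="\<lambda>S. \<bar>A S\<bar>"]) auto
next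
  case False thus ?thesis using assms by (simp add: mv_def mnorm_nonneg)
qed

lemma mnorm_gp: "mnorm p q (gp p q A B) \<le> mnorm p q A * mnorm p q B"
proof -
  let ?U = "{..<p+q}"
  have "mnorm p q (gp p q A B) = (\<Sum>S\<in>Pow ?U. \<bar>\<Sum>X\<in>Pow ?U. A X * B (symdiff X S) * bsign p X (symdiff X S)\<bar>)"
    unfolding mnorm_def by (intro sum.cong refl) (auto simp: gp_def)
  also have "\<dots> \<le> (\<Sum>S\<in>Pow ?U. \<Sum>X\<in>Pow ?U. \<bar>A X\<bar> * \<bar>B (symdiff X S)\<bar>)"
    by (intro sum_mono order.trans[OF sum_abs]) (simp add: abs_mult abs_bsign)
  also have "\<dots> = (\<Sum>X\<in>Pow ?U. \<bar>A X\<bar> * (\<Sum>S\<in>Pow ?U. \<bar>B (symdiff X S)\<bar>))"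
    by (subst sum.swap) (simp add: sum_distrib_left)
  also have "\<dots> = (\<Sum>X\<in>Pow ?U. \<bar>A X\<bar> * mnorm p q B)"
    unfolding mnorm_def by (intro sum.cong refl arg_cong2[where f="(*)"] sum_reindex_sd[symmetric]) auto
  also have "\<dots> = mnorm p q A * mnorm p q B"
    by (simp add: mnorm_def sum_distrib_right)
  finally show ?thesis .
qed

lemma mnorm_scalar1: "mnorm p q (scalar 1) = 1"
  unfolding mnorm_def scalar_def by (simp add: if_distrib sum.delta cong: if_cong)

lemma mv_mpow[simp]: "mv p q (mpow p q X n)" by (cases n) auto

lemma mnorm_mpow: "mnorm p q (mpow p q X n) \<le> mnorm p q X ^ n"
proof (induction n)
  case 0 thus ?case by (simp add: mnorm_scalar1)
next
  case (Suc n)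
  have "mnorm p q (mpow p q X (Suc n)) \<le> mnorm p q (mpow p q X n) * mnorm p q X"
    by (simp add: mnorm_gp)
  also have "\<dots> \<le> mnorm p q X ^ n * mnorm p q X"
    by (intro mult_right_mono Suc mnorm_nonneg)
  finally show ?case by (simp add: mult.commute)
qed

lemma summable_mpow: "summable (\<lambda>r. mpow p q X r T / fact r)"
proof (rule summable_comparison_test)
  show "summable (\<lambda>r. inverse (fact r) * mnorm p q X ^ r)" by (rule summable_exp)
  show "\<exists>N. \<forall>n\<ge>N. norm (mpow p q X n T / fact n) \<le> inverse (fact n) * mnorm p q X ^ n"
  proof (intro exI allI impI)
    fix n :: nat
    have "\<bar>mpow p q X n T\<bar> \<le> mnorm p q X ^ n"
      using coord_le[OF mv_mpow] mnorm_mpow order.trans by blast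
    thus "norm (mpow p q X n T / fact n) \<le> inverse (fact n) * mnorm p q X ^ n"
      by (simp add: divide_inverse mult.commute abs_mult mult_left_mono)
  qed
qed

lemma mexp_gp_left: "gp p q (mexp p q X) a = (\<lambda>S. \<Sum>r. gp p q (mpow p q X r) a S / fact r)"
proof (rule ext)
  fix S
  let ?U = "{..<p+q}"
  show "gp p q (mexp p q X) a S = (\<Sum>r. gp p q (mpow p q X r) a S / fact r)"
  proof (cases "S \<subseteq> ?U")
    case False thus ?thesis by (simp add: gp_def)
  next
    case True
    have "gp p q (mexp p q X) a S = (\<Sum>T\<in>Pow ?U. (\<Sum>r. mpow p q X r T / fact r) * (a (symdiff T S) * bsign p T (symdiff T S)))"
      using True by (simp add: gp_def mexp_def mult.assoc)
    also have "\<dots> = (\<Sum>T\<in>Pow ?U. \<Sum>r. mpow p q X r T / fact r * (a (symdiff T S) * bsign p T (symdiff T S)))"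
      by (intro sum.cong refl suminf_mult2 summable_mpow)
    also have "\<dots> = (\<Sum>r. \<Sum>T\<in>Pow ?U. mpow p q X r T / fact r * (a (symdiff T S) * bsign p T (symdiff T S)))"
      by (rule suminf_sum[symmetric]) (intro summable_mult2 summable_mpow)
    also have "\<dots> = (\<Sum>r. gp p q (mpow p q X r) a S / fact r)"
      using True by (simp add: gp_def sum_divide_distrib mult_ac)
    finally show ?thesis .
  qed
qed

lemma mexp_gp_right: "gp p q a (mexp p q X) = (\<lambda>S. \<Sum>r. gp p q a (mpow p q X r) S / fact r)"
proof (rule ext)
  fix S
  let ?U = "{..<p+q}"
  show "gp p q a (mexp p q X) S = (\<Sum>r. gp p q a (mpow p q X r) S / fact r)"
  proof (cases "S \<subseteq> ?U")
    case False thus ?thesis by (simp add: gp_def)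
  next
    case True
    have "gp p q a (mexp p q X) S = (\<Sum>T\<in>Pow ?U. (\<Sum>r. mpow p q X r (symdiff T S) / fact r) * (a T * bsign p T (symdiff T S)))"
      using True by (simp add: gp_def mexp_def mult_ac)
    also have "\<dots> = (\<Sum>T\<in>Pow ?U. \<Sum>r. mpow p q X r (symdiff T S) / fact r * (a T * bsign p T (symdiff T S)))"
      by (intro sum.cong refl suminf_mult2 summable_mpow)
    also have "\<dots> = (\<Sum>r. \<Sum>T\<in>Pow ?U. mpow p q X r (symdiff T S) / fact r * (a T * bsign p T (symdiff T S)))"
      by (rule suminf_sum[symmetric]) (intro summable_mult2 summable_mpow)
    also have "\<dots> = (\<Sum>r. gp p q a (mpow p q X r) S / fact r)"
      using True by (simp add: gp_def sum_divide_distrib mult_ac)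
    finally show ?thesis .
  qed
qed

lemma mpow_comm:
  assumes "mv p q a" "gp p q h a = smul s (gp p q a h)"
  shows "gp p q (mpow p q (smul c h) n) a = gp p q a (mpow p q (smul (c * s) h) n)"
proof (induction n)
  case 0 thus ?case using assms by (simp add: gp_scalar_left gp_scalar_right)
next
  case (Suc n)
  have X: "gp p q (smul c h) a = gp p q a (smul (c * s) h)"
    using assms by (simp add: gp_smul_left gp_smul_right)
  have "gp p q (mpow p q (smul c h) (Suc n)) a = gp p q (mpow p q (smul c h) n) (gp p q a (smul (c * s) h))"
    by (simp add: gp_assoc X)
  also have "\<dots> = gp p q (gp p q a (mpow p q (smul (c * s) h) n)) (smul (c * s) h)"
    by (simp add: gp_assoc[symmetric] Suc)
  also have "\<dots> = gp p q a (mpow p q (smul (c * s) h) (Suc n))"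
    by (simp add: gp_assoc)
  finally show ?case .
qed

lemma mabs_smul: assumes "c * c = 1" shows "mabs p q (smul c h) = mabs p q h"
  using assms by (simp add: mabs_def gp_smul_left gp_smul_right)

lemma gfun_comm:
  assumes "mv p q a" "gp p q h a = smul s (gp p q a h)" "s * s = 1"
  shows "gp p q (gfun p q K (mneg h)) a = gp p q a (gfun p q K (smul (- s) h))"
proof (cases K)
  case GExp
  have "gp p q (gfun p q K (mneg h)) a = (\<lambda>S. \<Sum>r. gp p q (mpow p q (smul (-1) h) r) a S / fact r)"
    using GExp by (simp add: mneg_smul mexp_gp_left)
  also have "\<dots> = (\<lambda>S. \<Sum>r. gp p q a (mpow p q (smul (-s) h) r) S / fact r)"
    using mpow_comm[OF assms(1,2), of "-1"] by simp
  also have "\<dots> = gp p q a (gfun p q K (smul (- s) h))"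
    using GExp by (simp add: mexp_gp_right)
  finally show ?thesis .
next
  case GCos
  have m: "mabs p q (smul (-1) h) = mabs p q h" "mabs p q (smul (-s) h) = mabs p q h"
    using assms(3) by (simp_all add: mabs_smul)
  show ?thesis using GCos assms m by (simp add: mneg_smul gp_scalar_left gp_scalar_right)
next
  case GSin
  have m: "mabs p q (smul (-1) h) = mabs p q h" "mabs p q (smul (-s) h) = mabs p q h"
    using assms(3) by (simp_all add: mabs_smul)
  show ?thesis using GSin assms m by (simp add: mneg_smul gp_smul_left gp_smul_right mult_ac)
next
  case GZero thus ?thesis by (simp add: gp_mzero_left gp_mzero_right)
qed

lemma mprod_comm:
  assumes "mv p q a" "\<forall>l\<in>set ls. gp p q (G1 l) a = gp p q a (G2 l)"
  shows "gp p q (mprod p q (map G1 ls)) a = gp p q a (mprod p q (map G2 ls))"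
  using assms(2)
proof (induction ls)
  case Nil thus ?case using assms(1) by (simp add: mprod_def gp_scalar_left gp_scalar_right)
next
  case (Cons l ls)
  have "gp p q (mprod p q (map G1 (l # ls))) a = gp p q (G1 l) (gp p q (mprod p q (map G1 ls)) a)"
    by (simp add: mprod_def gp_assoc)
  also have "\<dots> = gp p q (gp p q a (G2 l)) (mprod p q (map G2 ls))"
    using Cons by (simp add: gp_assoc[symmetric])
  also have "\<dots> = gp p q a (mprod p q (map G2 (l # ls)))"
    by (simp add: mprod_def gp_assoc)
  finally show ?case .
qed

lemma minv_eq:
  assumes "mv p q B" "gp p q B B = scalar r" "r \<noteq> 0"
  shows "minv p q B = smul (1/r) B"
  unfolding minv_def
proof (rule the_equality)
  show "mv p q (smul (1/r) B) \<and> gp p q B (smul (1/r) B) = scalar 1 \<and> gp p q (smul (1/r) B) B = scalar 1"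
    using assms by (simp add: gp_smul_left gp_smul_right) (simp add: smul_def scalar_def fun_eq_iff)
  fix C assume C: "mv p q C \<and> gp p q B C = scalar 1 \<and> gp p q C B = scalar 1"
  have i: "gp p q (smul (1/r) B) B = scalar 1"
    using assms by (simp add: gp_smul_left) (simp add: smul_def scalar_def fun_eq_iff)
  have "C = gp p q (gp p q (smul (1/r) B) B) C" using C by (simp add: i gp_scalar_left)
  also have "\<dots> = gp p q (smul (1/r) B) (gp p q B C)" by (simp add: gp_assoc)
  also have "\<dots> = smul (1/r) B" using C assms by (simp add: gp_scalar_right)
  finally show "C = smul (1/r) B" .
qed

definition Js :: "nat \<Rightarrow> nat list set" where
  "Js n = {js. length js = n \<and> set js \<subseteq> {0,1}}"

lemma Js_finite: "finite (Js n)"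
proof -
  have "Js n = {xs. set xs \<subseteq> {0,1} \<and> length xs = n}" by (auto simp: Js_def)
  thus ?thesis using finite_lists_length_eq[of "{0::nat,1}" n] by simp
qed

lemma Js_Suc: "Js (Suc n) = (\<lambda>(j,js). j # js) ` ({0,1} \<times> Js n)"
proof
  show "Js (Suc n) \<subseteq> (\<lambda>(j,js). j # js) ` ({0,1} \<times> Js n)"
  proof
    fix xs assume "xs \<in> Js (Suc n)"
    then obtain j js where "xs = j # js" "length js = n" "set js \<subseteq> {0,1}" "j \<in> {0,1}"
      by (auto simp: Js_def length_Suc_conv)
    thus "xs \<in> (\<lambda>(j,js). j # js) ` ({0,1} \<times> Js n)"
      by (auto simp: Js_def image_iff)
  qed
  show "(\<lambda>(j,js). j # js) ` ({0,1} \<times> Js n) \<subseteq> Js (Suc n)"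
    by (auto simp: Js_def)
qed

lemma cproj1_sum: "cproj1 p q 0 B A S + cproj1 p q 1 B A S = A S"
  by (simp add: cproj1_def smul_def madd_def algebra_simps)

lemma decomp: "A = (\<lambda>S. \<Sum>js\<in>Js (length Bs). cproj p q A (zip js Bs) S)"
proof (induction Bs arbitrary: A)
  case Nil
  have "Js 0 = {[]}" by (auto simp: Js_def)
  thus ?case by simp
next
  case (Cons B Bs)
  show ?case
  proof (rule ext)
    fix S
    have inj: "inj_on (\<lambda>(j,js). j # js) ({0::nat,1} \<times> Js (length Bs))"
      by (auto simp: inj_on_def)
    have "(\<Sum>js\<in>Js (length (B # Bs)). cproj p q A (zip js (B # Bs)) S)
        = (\<Sum>z\<in>{0::nat,1} \<times> Js (length Bs). cproj p q (cproj1 p q (fst z) B A) (zip (snd z) Bs) S)"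
      unfolding length_Cons Js_Suc sum.reindex[OF inj] by (simp add: case_prod_beta)
    also have "\<dots> = (\<Sum>j\<in>{0::nat,1}. \<Sum>js\<in>Js (length Bs). cproj p q (cproj1 p q j B A) (zip js Bs) S)"
      by (simp add: sum.cartesian_product case_prod_beta)
    also have "\<dots> = (\<Sum>j\<in>{0::nat,1}. cproj1 p q j B A S)"
      by (intro sum.cong refl) (metis Cons.IH)
    also have "\<dots> = A S" using cproj1_sum[of p q B A S] by simp
    finally show "A S = (\<Sum>js\<in>Js (length (B # Bs)). cproj p q A (zip js (B # Bs)) S)" by simp
  qed
qed

lemma mv_cproj1: "mv p q a \<Longrightarrow> mv p q (cproj1 p q j B a)"
  by (simp add: cproj1_def)

lemma mv_cproj: "mv p q a \<Longrightarrow> mv p q (cproj p q a ps)"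
  by (induction ps arbitrary: a) (auto simp: mv_cproj1)

lemma Iset_D:
  assumes "B \<in> Iset p q"
  obtains r where "mv p q B" "gp p q B B = scalar r" "r \<noteq> 0" "minv p q B = smul (1/r) B"
proof -
  from assms obtain r where "mv p q B" "gp p q B B = scalar r" "r < 0" by (auto simp: Iset_def)
  thus ?thesis using that minv_eq[of p q B r] by auto
qed

lemma aux1:
  assumes "t * t = 1"
  shows "smul (1/2) (madd X (smul t Y)) = smul t (smul (1/2) (madd Y (smul t X)))"
proof (rule ext)
  fix S
  have "t * (1/2 * (Y S + t * X S)) = 1/2 * (t * t) * X S + 1/2 * t * Y S" by (simp add: algebra_simps)
  thus "smul (1/2) (madd X (smul t Y)) S = smul t (smul (1/2) (madd Y (smul t X))) S"
    unfolding smul_def madd_def using assms by (simp add: algebra_simps)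
qed

lemma aux2: "smul (1/2) (madd (smul s X) (smul t (smul s Y))) = smul s (smul (1/2) (madd X (smul t Y)))"
  by (rule ext) (simp add: smul_def madd_def algebra_simps)

lemma comm_own:
  assumes "B \<in> Iset p q" "mv p q a"
  shows "gp p q B (cproj1 p q j B a) = smul ((-1)^j) (gp p q (cproj1 p q j B a) B)"
proof -
  obtain r where B: "mv p q B" "gp p q B B = scalar r" "r \<noteq> 0" "minv p q B = smul (1/r) B"
    using Iset_D[OF assms(1)] by blast
  have BB: "gp p q B (gp p q B X) = smul r X" if "mv p q X" for X
    using B that by (simp add: gp_assoc[symmetric] gp_scalar_left)
  have BB2: "gp p q X (gp p q B B) = smul r X" if "mv p q X" for X
    using B that by (simp add: gp_scalar_right)
  have e1: "gp p q B (gp p q (gp p q (minv p q B) a) B) = gp p q a B"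
    using B assms(2) by (simp add: gp_assoc gp_smul_left gp_smul_right BB)
  have e2: "gp p q (gp p q (gp p q (minv p q B) a) B) B = gp p q B a"
  proof -
    have "gp p q (gp p q (gp p q (minv p q B) a) B) B = smul (1/r) (gp p q (gp p q B a) (gp p q B B))"
      using B by (simp add: gp_assoc gp_smul_left)
    also have "\<dots> = gp p q B a" using B by (simp add: gp_scalar_right)
    finally show ?thesis .
  qed
  have t: "((-1::real)^j) * ((-1)^j) = 1" by (simp add: power_mult_distrib[symmetric])
  have L: "gp p q B (cproj1 p q j B a) = smul (1/2) (madd (gp p q B a) (smul ((-1)^j) (gp p q a B)))"
    unfolding cproj1_def gp_smul_right gp_madd_right e1 ..
  have R: "gp p q (cproj1 p q j B a) B = smul (1/2) (madd (gp p q a B) (smul ((-1)^j) (gp p q B a)))"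
    unfolding cproj1_def gp_smul_left gp_madd_left e2 ..
  show ?thesis unfolding L R by (rule aux1[OF t])
qed

lemma coorth_eps:
  assumes "coorth p q h C"
  obtains e where "e * e = 1" "gp p q h C = smul e (gp p q C h)"
proof -
  have "gp p q h C = gp p q C h \<or> gp p q h C = mneg (gp p q C h)" using assms by (simp add: coorth_def)
  thus ?thesis
  proof
    assume "gp p q h C = gp p q C h" thus ?thesis using that[of 1] by simp
  next
    assume "gp p q h C = mneg (gp p q C h)" thus ?thesis using that[of "-1"] by (simp add: mneg_smul)
  qed
qed

lemma comm_pres:
  assumes "mv p q a" "C \<in> Iset p q" "coorth p q h C" "gp p q h a = smul s (gp p q a h)"
  shows "gp p q h (cproj1 p q j C a) = smul s (gp p q (cproj1 p q j C a) h)"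
proof -
  obtain r where B: "mv p q C" "gp p q C C = scalar r" "r \<noteq> 0" "minv p q C = smul (1/r) C"
    using Iset_D[OF assms(2)] by blast
  obtain e where e: "e * e = 1" "gp p q h C = smul e (gp p q C h)"
    using coorth_eps[OF assms(3)] by blast
  have ese: "e * s * e = s" proof -
    have "e * s * e = s * (e * e)" by (simp only: ac_simps)
    thus ?thesis using e by simp
  qed
  have key: "gp p q h (gp p q C (gp p q a C)) = smul s (gp p q C (gp p q a (gp p q C h)))"
  proof -
    have "gp p q h (gp p q C (gp p q a C)) = gp p q (gp p q h C) (gp p q a C)" by (simp add: gp_assoc)
    also have "\<dots> = smul e (gp p q (gp p q C h) (gp p q a C))" using e by (simp add: gp_smul_left)
    also have "\<dots> = smul e (gp p q C (gp p q (gp p q h a) C))" by (simp add: gp_assoc)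
    also have "\<dots> = smul (e * s) (gp p q C (gp p q (gp p q a h) C))"
      using assms(4) by (simp add: gp_smul_left gp_smul_right)
    also have "\<dots> = smul (e * s) (gp p q C (gp p q a (gp p q h C)))" by (simp add: gp_assoc)
    also have "\<dots> = smul (e * s * e) (gp p q C (gp p q a (gp p q C h)))"
      using e by (simp add: gp_smul_right)
    also have "\<dots> = smul s (gp p q C (gp p q a (gp p q C h)))" using ese by (simp only:)
    finally show ?thesis .
  qed
  have c1: "gp p q h (gp p q (gp p q (minv p q C) a) C) = smul s (gp p q (gp p q (gp p q (minv p q C) a) C) h)"
    unfolding B(4) by (simp add: gp_smul_left gp_smul_right gp_assoc key mult.commute)
  have L: "gp p q h (cproj1 p q j C a) = smul (1/2) (madd (smul s (gp p q a h)) (smul ((-1)^j) (smul s (gp p q (gp p q (gp p q (minv p q C) a) C) h))))"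
    unfolding cproj1_def gp_smul_right gp_madd_right assms(4) c1 ..
  have R: "gp p q (cproj1 p q j C a) h = smul (1/2) (madd (gp p q a h) (smul ((-1)^j) (gp p q (gp p q (gp p q (minv p q C) a) C) h)))"
    unfolding cproj1_def gp_smul_left gp_madd_left ..
  show ?thesis unfolding L R by (rule aux2)
qed

lemma cproj_pres:
  assumes "\<forall>(j,C)\<in>set ps. C \<in> Iset p q \<and> coorth p q h C" "mv p q a"
    "gp p q h a = smul s (gp p q a h)"
  shows "gp p q h (cproj p q a ps) = smul s (gp p q (cproj p q a ps) h)"
  using assms
proof (induction ps arbitrary: a)
  case Nil thus ?case by simp
next
  case (Cons jc ps)
  obtain j C where jc: "jc = (j, C)" by (cases jc)
  have "gp p q h (cproj1 p q j C a) = smul s (gp p q (cproj1 p q j C a) h)"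
    using Cons.prems jc by (intro comm_pres) auto
  hence "gp p q h (cproj p q (cproj1 p q j C a) ps) = smul s (gp p q (cproj p q (cproj1 p q j C a) ps) h)"
    using Cons.prems jc by (intro Cons.IH) (auto simp: mv_cproj1)
  thus ?case using jc by simp
qed

lemma cproj_comm:
  assumes "\<forall>B\<in>set Bs. B \<in> Iset p q" "\<forall>B\<in>set Bs. \<forall>B'\<in>set Bs. coorth p q B B'"
    "length js = length Bs" "mv p q A" "i < length Bs"
  shows "gp p q (Bs!i) (cproj p q A (zip js Bs)) = smul ((-1)^(js!i)) (gp p q (cproj p q A (zip js Bs)) (Bs!i))"
  using assms
proof (induction Bs arbitrary: js A i)
  case Nil thus ?case by simp
next
  case (Cons B Bs)
  obtain j js' where js: "js = j # js'" "length js' = length Bs"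
    using Cons.prems(3) by (cases js) auto
  show ?case
  proof (cases i)
    case 0
    have own: "gp p q B (cproj1 p q j B A) = smul ((-1)^j) (gp p q (cproj1 p q j B A) B)"
      using Cons.prems by (intro comm_own) auto
    have "\<forall>(j,C)\<in>set (zip js' Bs). C \<in> Iset p q \<and> coorth p q B C"
      using Cons.prems by (auto dest: set_zip_rightD)
    hence "gp p q B (cproj p q (cproj1 p q j B A) (zip js' Bs)) = smul ((-1)^j) (gp p q (cproj p q (cproj1 p q j B A) (zip js' Bs)) B)"
      using own Cons.prems by (intro cproj_pres) (auto simp: mv_cproj1)
    thus ?thesis using 0 js by simp
  next
    case (Suc i')
    have "gp p q (Bs!i') (cproj p q (cproj1 p q j B A) (zip js' Bs)) = smul ((-1)^(js'!i')) (gp p q (cproj p q (cproj1 p q j B A) (zip js' Bs)) (Bs!i'))"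
      using Cons.prems js Suc by (intro Cons.IH) (auto simp: mv_cproj1)
    thus ?thesis using Suc js by simp
  qed
qed

theorem lemma4p7:
  fixes p q d :: nat and f :: "nat \<Rightarrow> real^'m \<Rightarrow> real^'m \<Rightarrow> mv"
    and k :: "nat \<Rightarrow> gkind" and A :: mv and x u :: "real^'m"
  assumes "\<forall>l\<in>{1..d}. \<forall>x u. f l x u \<in> Iset p q \<and> blade p q (f l x u)"
    and "\<forall>l\<in>{1..d}. \<forall>l'\<in>{1..d}. \<forall>x u. coorth p q (f l x u) (f l' x u)"
    and "mv p q A"
  shows "gp p q (mprod p q (map (\<lambda>l. gfun p q (k l) (mneg (f l x u))) [1..<d+1])) A =
    (\<lambda>S. \<Sum>js\<in>{js. length js = d \<and> set js \<subseteq> {0,1}}.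
       gp p q (cproj p q A (zip js (map (\<lambda>l. f l x u) [1..<d+1])))
         (mprod p q (map (\<lambda>l. gfun p q (k l) (smul (- ((-1) ^ (js ! (l-1)))) (f l x u))) [1..<d+1])) S)"
proof -
  define hs where "hs = map (\<lambda>l. f l x u) [1..<d+1]"
  have len: "length hs = d" by (simp add: hs_def)
  have nth: "hs ! i = f (Suc i) x u" if "i < d" for i
    using that by (simp add: hs_def nth_map nth_upt del: upt_Suc)
  have Iss: "\<forall>B\<in>set hs. B \<in> Iset p q" using assms(1) by (auto simp: hs_def)
  have co: "\<forall>B\<in>set hs. \<forall>B'\<in>set hs. coorth p q B B'" using assms(2) by (auto simp: hs_def)
  have mvh: "mv p q (f l x u)" if "l \<in> {1..d}" for l
    using assms(1) that by (auto simp: Iset_def)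
  define M where "M = mprod p q (map (\<lambda>l. gfun p q (k l) (mneg (f l x u))) [1..<d+1])"
  have D: "A = (\<lambda>S. \<Sum>js\<in>Js d. cproj p q A (zip js hs) S)"
    using decomp[of A p q hs] len by simp
  have "gp p q M A = gp p q M (\<lambda>S. \<Sum>js\<in>Js d. cproj p q A (zip js hs) S)"
    using arg_cong[OF D, of "gp p q M"] .
  also have "\<dots> = (\<lambda>S. \<Sum>js\<in>Js d. gp p q M (cproj p q A (zip js hs)) S)"
    by (rule gp_sum_right)
  also have "\<dots> = (\<lambda>S. \<Sum>js\<in>Js d. gp p q (cproj p q A (zip js hs))
         (mprod p q (map (\<lambda>l. gfun p q (k l) (smul (- ((-1) ^ (js ! (l-1)))) (f l x u))) [1..<d+1])) S)"
  proof (rule ext, rule sum.cong[OF refl])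
    fix S js assume js: "js \<in> Js d"
    let ?a = "cproj p q A (zip js hs)"
    have mva: "mv p q ?a" by (rule mv_cproj[OF assms(3)])
    have "gp p q M ?a = gp p q ?a (mprod p q (map (\<lambda>l. gfun p q (k l) (smul (- ((-1) ^ (js ! (l-1)))) (f l x u))) [1..<d+1]))"
      unfolding M_def
    proof (rule mprod_comm[OF mva], rule ballI)
      fix l assume l: "l \<in> set [1..<d+1]"
      hence l1: "l - 1 < d" "l \<in> {1..d}" by auto
      have hl: "hs ! (l-1) = f l x u" using nth[OF l1(1)] l1 by simp
      have c0: "gp p q (hs ! (l-1)) ?a = smul ((-1) ^ (js ! (l-1))) (gp p q ?a (hs ! (l-1)))"
        by (rule cproj_comm[OF Iss co]) (use js len l1 assms(3) in \<open>auto simp: Js_def\<close>)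
      have c: "gp p q (f l x u) ?a = smul ((-1) ^ (js ! (l-1))) (gp p q ?a (f l x u))"
        using c0 hl by simp
      have sq: "((-1::real) ^ (js ! (l-1))) * ((-1) ^ (js ! (l-1))) = 1"
        by (simp add: power_mult_distrib[symmetric])
      show "gp p q (gfun p q (k l) (mneg (f l x u))) ?a =
            gp p q ?a (gfun p q (k l) (smul (- ((-1) ^ (js ! (l-1)))) (f l x u)))"
        by (rule gfun_comm[OF mva c sq])
    qed
    thus "gp p q M ?a S = gp p q ?a (mprod p q (map (\<lambda>l. gfun p q (k l) (smul (- ((-1) ^ (js ! (l-1)))) (f l x u))) [1..<d+1])) S"
      by simp
  qed
  finally show ?thesis unfolding M_def Js_def hs_def .
qed

end
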